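(* Let $f_1,\dots,f_T\in\mathbb R$ be piecewise constant with change points $0=\eta_0<\eta_1<\dots<\eta_{K+1}=T$, i.e. $f$ is constant on $\{\eta_k+1,\dots,\eta_{k+1}\}$ for each $k$, and let $\kappa_r=|f_{\eta_r+1}-f_{\eta_r}|$. Let $0\le s<e\le T$ be integers such that $\eta_{r-1}\le s<\eta_r<\eta_{r+1}\le\dots\le\eta_{r+q}\le e\le\eta_{r+q+1}$ for some $q\ge1$, with $\eta_{r+1}<e$. If $\eta_r-s\le c_1^2\Delta$ for some $c_1\le1/4$ and $\eta_{r+1}-\eta_r\ge\Delta$, then \[ |\widetilde f^{s,e}_{\eta_r}|\le c_1|\widetilde f^{s,e}_{\eta_{r+1}}|+2\kappa_r\sqrt{\eta_r-s}, \] where for $s<t<e$, \[ \widetilde f^{s,e}_t=\sqrt{\frac{e-t}{(e-s)(t-s)}}\sum_{i=s+1}^tf_i-\sqrt{\frac{t-s}{(e-s)(e-t)}}\sum_{i=t+1}^ef_i. \] *)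

theory Defs
  imports Complex_Main
begin

definition cusum :: "(nat \<Rightarrow> real) \<Rightarrow> nat \<Rightarrow> nat \<Rightarrow> nat \<Rightarrow> real" where
  "cusum f s e t =
     sqrt ((real e - real t) / ((real e - real s) * (real t - real s))) * (\<Sum>i=s+1..t. f i)
   - sqrt ((real t - real s) / ((real e - real s) * (real e - real t))) * (\<Sum>i=t+1..e. f i)"

end

theory Submission
  imports Defs
begin

lemma sqrt_aux:
  fixes n u v w :: real assumes "n > 0" "u > 0" "v > 0" "w \<ge> 0"
  shows "sqrt (w / (n * u * v)) = w / n * sqrt (n / (u * v * w))"
proof (cases "w = 0")
  case False
  then have w: "w > 0" using assms by simp
  have "w / (n * u * v) = (w / n)^2 * (n / (u * v * w))" using assms w by (simp add: field_simps power2_eq_square)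
  then have "sqrt (w / (n * u * v)) = sqrt ((w / n)^2) * sqrt (n / (u * v * w))"
    by (simp only: real_sqrt_mult)
  then show ?thesis using assms w by simp
qed simp

lemma cusum_alt:
  assumes "s < t" "t < e"
  shows "cusum f s e t = ((\<Sum>i=s+1..t. f i) - (real t - real s)/(real e - real s) * (\<Sum>i=s+1..e. f i))
            * sqrt ((real e - real s) / ((real t - real s) * (real e - real t)))"
proof -
  define n where "n = real e - real s"
  define u where "u = real t - real s"
  define v where "v = real e - real t"
  define A where "A = (\<Sum>i=s+1..t. f i)"
  define B where "B = (\<Sum>i=t+1..e. f i)"
  have pos: "n > 0" "u > 0" "v > 0" using assms unfolding n_def u_def v_def by auto
  have nuv: "n = u + v" unfolding n_def u_def v_def by simp
  have split: "(\<Sum>i=s+1..e. f i) = A + B"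
    unfolding A_def B_def using assms sum.ub_add_nat[of "s+1" t f "e - t"] by simp
  define Q where "Q = sqrt (n / (u * v))"
  have q1: "sqrt (v / (n * u)) = v / n * Q" unfolding Q_def
    using sqrt_aux[of n u 1 v] pos by (simp add: mult.commute)
  have q2: "sqrt (u / (n * v)) = u / n * Q" unfolding Q_def
    using sqrt_aux[of n 1 v u] pos by (simp add: mult.commute)
  have "cusum f s e t = sqrt (v / (n * u)) * A - sqrt (u / (n * v)) * B"
    unfolding cusum_def n_def u_def v_def A_def B_def by simp
  also have "\<dots> = (A - u / n * (A + B)) * Q"
  proof -
    have "v / n * Q * A - u / n * Q * B = (A - u / n * (A + B)) * Q"
    proof -
      have "v / n = 1 - u / n" using pos(1) nuv by (simp add: field_simps)
      moreover have "\<And>p::real. (1 - p) * Q * A - p * Q * B = (A - p * (A + B)) * Q"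
        by (simp add: algebra_simps)
      ultimately show ?thesis by metis
    qed
    then show ?thesis unfolding q1 q2 by (simp add: mult.commute)
  qed
  finally show ?thesis unfolding split A_def n_def u_def v_def Q_def .
qed

lemma core:
  fixes a b n c1 m x d :: real
  assumes a: "a > 0" and ab: "a \<le> c1^2 * b" and c1: "0 < c1" "c1 \<le> 1/4" and n: "n > a + b"
  shows "\<bar>a * x\<bar> * sqrt (n / (a * (n - a)))
     \<le> c1 * \<bar>a * x + b * (x - d)\<bar> * sqrt (n / ((a+b) * (n - a - b))) + 2 * \<bar>d\<bar> * sqrt a"
proof -
  have b: "b > 0"
  proof (rule ccontr)
    assume "\<not> b > 0"
    then have "c1^2 * b \<le> 0" by (simp add: mult_nonneg_nonpos)
    then show False using a ab by linarith
  qed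
  define A where "A = a * sqrt (n / (a * (n - a)))"
  define C where "C = c1 * sqrt (n / ((a+b) * (n - a - b)))"
  define x0 where "x0 = b * d / (a+b)"
  have A0: "A \<ge> 0" using a n b unfolding A_def by simp
  have Asq: "A = sqrt (a * n / (n - a))"
  proof -
    have "a * n / (n - a) = a^2 * (n / (a * (n - a)))" using a n b by (simp add: field_simps power2_eq_square)
    then have "sqrt (a * n / (n - a)) = sqrt (a^2) * sqrt (n / (a * (n - a)))"
      by (simp only: real_sqrt_mult)
    then show ?thesis unfolding A_def using a by simp
  qed
  have CA: "A \<le> C * (a + b)"
  proof -
    have "C * (a+b) = sqrt (c1^2 * (a+b) * n / (n - a - b))"
    proof -
      have gen: "\<And>E D. E > 0 \<Longrightarrow> D > 0 \<Longrightarrow> c1^2 * E * n / D = (c1 * E)^2 * (n / (E * D))"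
        by (simp add: field_simps power2_eq_square)
      have "c1^2 * (a+b) * n / (n - a - b) = (c1 * (a+b))^2 * (n / ((a+b) * (n - a - b)))"
        using a n b by (intro gen) auto
      then have "sqrt (c1^2 * (a+b) * n / (n - a - b)) = sqrt ((c1 * (a+b))^2) * sqrt (n / ((a+b) * (n - a - b)))"
        by (simp only: real_sqrt_mult)
      then show ?thesis unfolding C_def using a b c1 by simp
    qed
    moreover have "a * n / (n - a) \<le> c1^2 * (a+b) * n / (n - a - b)"
    proof -
      have "a * n / (n - a) \<le> a * n / (n - a - b)"
        using a b n by (intro divide_left_mono) (auto intro: mult_pos_pos)
      also have "\<dots> \<le> c1^2 * (a+b) * n / (n - a - b)"
      proof (intro divide_right_mono mult_right_mono)
        have "0 \<le> c1^2 * a" using a by simp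
        then show "a \<le> c1^2 * (a + b)" using ab by (simp add: distrib_left)
      qed (use a b n in auto)
      finally show ?thesis .
    qed
    ultimately show ?thesis unfolding Asq by simp
  qed
  have A2: "A \<le> 2 * sqrt a"
  proof -
    have "c1^2 \<le> 1" using c1 by (simp add: power_le_one)
    then have "c1^2 * b \<le> b" using b by (simp add: mult_left_le_one_le)
    then have "a \<le> b" using ab by linarith
    then have "a * n / (n - a) \<le> 4 * a" using a b n by (simp add: field_simps)
    then have "A \<le> sqrt (4 * a)" unfolding Asq by simp
    also have "\<dots> = 2 * sqrt a" by (simp add: real_sqrt_mult)
    finally show ?thesis .
  qed
  have x0d: "\<bar>x0\<bar> \<le> \<bar>d\<bar>"
    using a b unfolding x0_def by (simp add: abs_mult divide_le_eq_1 field_simps mult_left_mono)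
  have eq1: "\<bar>a * x\<bar> * sqrt (n / (a * (n - a))) = A * \<bar>x\<bar>" unfolding A_def using a by (simp add: abs_mult)
  have eq2: "c1 * \<bar>a * x + b * (x - d)\<bar> * sqrt (n / ((a+b) * (n - a - b))) = C * (a+b) * \<bar>x - x0\<bar>"
  proof -
    have "a * x + b * (x - d) = (a+b) * (x - x0)" unfolding x0_def using a b by (simp add: field_simps)
    then show ?thesis unfolding C_def using a b by (simp add: abs_mult)
  qed
  have "A * \<bar>x\<bar> \<le> A * \<bar>x - x0\<bar> + A * \<bar>x0\<bar>"
    using A0 by (metis abs_triangle_ineq diff_add_cancel distrib_left mult_left_mono)
  also have "\<dots> \<le> C * (a+b) * \<bar>x - x0\<bar> + 2 * sqrt a * \<bar>d\<bar>"
    using CA A2 x0d A0 a by (intro add_mono mult_mono) auto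
  finally show ?thesis unfolding eq1 eq2 by (simp add: mult_ac)
qed

theorem lemma23:
  fixes f :: "nat \<Rightarrow> real" and \<eta> :: "nat \<Rightarrow> nat"
    and T K r q s e :: nat and c1 \<Delta> :: real
  assumes eta0: "\<eta> 0 = 0" and etaK: "\<eta> (K + 1) = T"
    and eta_mono: "\<forall>k \<le> K. \<eta> k < \<eta> (Suc k)"
    and piecewise_const: "\<forall>k \<le> K. \<forall>i \<in> {\<eta> k + 1 .. \<eta> (Suc k)}. \<forall>j \<in> {\<eta> k + 1 .. \<eta> (Suc k)}. f i = f j"
    and change: "\<forall>k. 1 \<le> k \<and> k \<le> K \<longrightarrow> f (\<eta> k + 1) \<noteq> f (\<eta> k)"
    and r1: "1 \<le> r" and q1: "1 \<le> q" and rqK: "r + q + 1 \<le> K + 1"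
    and se: "s < e" and eT: "e \<le> T"
    and s_lo: "\<eta> (r - 1) \<le> s" and s_hi: "s < \<eta> r"
    and e_lo: "\<eta> (r + q) \<le> e" and e_hi: "e \<le> \<eta> (r + q + 1)"
    and e_r1: "\<eta> (r + 1) < e"
    and c1_pos: "0 < c1" and c1_le: "c1 \<le> 1/4"
    and close: "real (\<eta> r - s) \<le> c1^2 * \<Delta>"
    and gap: "real (\<eta> (r + 1) - \<eta> r) \<ge> \<Delta>"
  shows "\<bar>cusum f s e (\<eta> r)\<bar>
           \<le> c1 * \<bar>cusum f s e (\<eta> (r + 1))\<bar>
             + 2 * \<bar>f (\<eta> r + 1) - f (\<eta> r)\<bar> * sqrt (real (\<eta> r - s))"
  proof -
  define p where "p = \<eta> r"
  define p1 where "p1 = \<eta> (r + 1)"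
  define \<mu>0 where "\<mu>0 = f p"
  define \<mu>1 where "\<mu>1 = f (p + 1)"
  have rK: "r + 1 \<le> K" using rqK q1 by simp
  have pp1: "p < p1" using eta_mono rK unfolding p_def p1_def by simp
  have sp: "s < p" using s_hi unfolding p_def .
  have p1e: "p1 < e" using e_r1 unfolding p1_def .
  have c0: "\<forall>i \<in> {s+1..p}. f i = \<mu>0"
  proof
    fix i assume i: "i \<in> {s+1..p}"
    have "r - 1 \<le> K" using rK by simp
    moreover have "Suc (r - 1) = r" using r1 by simp
    moreover have "i \<in> {\<eta> (r-1) + 1 .. \<eta> r}" "p \<in> {\<eta> (r-1) + 1 .. \<eta> r}"
      using i s_lo sp unfolding p_def by auto
    ultimately show "f i = \<mu>0" unfolding \<mu>0_def using piecewise_const by metis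
  qed
  have c1': "\<forall>i \<in> {p+1..p1}. f i = \<mu>1"
  proof
    fix i assume i: "i \<in> {p+1..p1}"
    have "r \<le> K" using rK by simp
    moreover have "i \<in> {\<eta> r + 1 .. \<eta> (Suc r)}" "p + 1 \<in> {\<eta> r + 1 .. \<eta> (Suc r)}"
      using i pp1 unfolding p_def p1_def by auto
    ultimately show "f i = \<mu>1" unfolding \<mu>1_def using piecewise_const by metis
  qed
  define a where "a = real p - real s"
  define b where "b = real p1 - real p"
  define n where "n = real e - real s"
  define S where "S = (\<Sum>i=s+1..e. f i)"
  define m where "m = S / n"
  define x where "x = \<mu>0 - m"
  define d where "d = \<mu>0 - \<mu>1"
  have a0: "a > 0" using sp unfolding a_def by simp
  have sum0: "(\<Sum>i=s+1..p. f i) = a * \<mu>0"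
  proof -
    have "(\<Sum>i=s+1..p. f i) = (\<Sum>i=s+1..p. \<mu>0)" using c0 by (intro sum.cong) auto
    then show ?thesis using sp unfolding a_def by (simp add: of_nat_diff)
  qed
  have sum1': "(\<Sum>i=p+1..p1. f i) = b * \<mu>1"
  proof -
    have "(\<Sum>i=p+1..p1. f i) = (\<Sum>i=p+1..p1. \<mu>1)" using c1' by (intro sum.cong) auto
    then show ?thesis using pp1 unfolding b_def by (simp add: of_nat_diff)
  qed
  have sum1: "(\<Sum>i=s+1..p1. f i) = a * \<mu>0 + b * \<mu>1"
    using sum.ub_add_nat[of "s+1" p f "p1 - p"] sp pp1 sum0 sum1' by simp
  have nab: "n > a + b" using p1e unfolding n_def a_def b_def by simp
  have b0: "b > 0" using pp1 unfolding b_def by simp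
  have n0: "n > 0" using se unfolding n_def by simp
  have lhs: "\<bar>cusum f s e p\<bar> = \<bar>a * x\<bar> * sqrt (n / (a * (n - a)))"
  proof -
    have "cusum f s e p = (a * \<mu>0 - a / n * S) * sqrt (n / (a * (n - a)))"
      using cusum_alt[of s p e f] sp pp1 p1e sum0 unfolding a_def n_def S_def by simp
    also have "a * \<mu>0 - a / n * S = a * x" unfolding x_def m_def by (simp add: algebra_simps)
    moreover have "sqrt (n / (a * (n - a))) \<ge> 0" using a0 nab b0 by simp
    ultimately show ?thesis by (simp add: abs_mult)
  qed
  have rhs: "\<bar>cusum f s e p1\<bar> = \<bar>a * x + b * (x - d)\<bar> * sqrt (n / ((a+b) * (n - a - b)))"
  proof -
    have "cusum f s e p1 = (a * \<mu>0 + b * \<mu>1 - (a + b) / n * S) * sqrt (n / ((a+b) * (n - a - b)))"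
      using cusum_alt[of s p1 e f] sp pp1 p1e sum1 unfolding a_def b_def n_def S_def by simp
    also have "a * \<mu>0 + b * \<mu>1 - (a + b) / n * S = a * x + b * (x - d)"
      unfolding x_def m_def d_def by (simp add: algebra_simps add_divide_distrib)
    moreover have "sqrt (n / ((a+b) * (n - a - b))) \<ge> 0" using a0 nab b0 by simp
    ultimately show ?thesis by (simp add: abs_mult)
  qed
  have ab: "a \<le> c1^2 * b"
  proof -
    have ea: "a = real (\<eta> r - s)" using sp unfolding a_def p_def by simp
    have eb: "b = real (\<eta> (r + 1) - \<eta> r)" using pp1 unfolding b_def p_def p1_def by simp
    have "c1^2 * \<Delta> \<le> c1^2 * real (\<eta> (r + 1) - \<eta> r)"
      using gap c1_pos by (intro mult_left_mono) auto
    then show ?thesis unfolding ea eb using close by linarith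
  qed
  have kd: "\<bar>f (\<eta> r + 1) - f (\<eta> r)\<bar> = \<bar>d\<bar>" unfolding d_def \<mu>0_def \<mu>1_def p_def by simp
  have sa: "sqrt (real (\<eta> r - s)) = sqrt a" using sp unfolding a_def p_def by simp
  have fin: "\<bar>cusum f s e p\<bar> \<le> c1 * \<bar>cusum f s e p1\<bar> + 2 * \<bar>d\<bar> * sqrt a"
    unfolding lhs rhs using core[OF a0 ab c1_pos c1_le nab, of x d] by (simp add: mult.assoc)
  show ?thesis using fin unfolding kd sa p_def p1_def .
qed

end
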